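(* Let $0\le\beta\le1$. Then $C_\beta[f]\in\mathcal{K}((1-\beta)/2)$ for every $f\in\mathcal{K}$. In particular, $C_\beta[f]\in\mathcal{K}$ for every $f\in\mathcal{K}$.
   Context: $\mathbb{D}$ is the open unit disk; $\mathcal{A}$ the class of analytic $f$ on $\mathbb{D}$ with $f(0)=0$, $f'(0)=1$. For $\lambda<1$, $\mathcal{K}(\lambda)=\{f\in\mathcal{A}: f'\ne0,\ \mathrm{Re}\,(1+zf''(z)/f'(z))>\lambda \text{ on }\mathbb{D}\}$, and $\mathcal{K}=\mathcal{K}(0)$ is the class of normalized convex univalent functions. For $\beta\ge0$ and $f$ analytic on $\mathbb{D}$ with $f(0)=0$, $C_\beta[f](z)=\int_0^z \frac{f(w)}{w(1-w)^\beta}\,dw$ (principal branch of $(1-w)^\beta$). *)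

theory Defs
  imports "HOL-Complex_Analysis.Complex_Analysis"
begin

abbreviation unit_disk :: "complex set" where
  "unit_disk \<equiv> ball 0 1"

definition normalized_analytic :: "(complex \<Rightarrow> complex) \<Rightarrow> bool" where
  "normalized_analytic f \<longleftrightarrow> f holomorphic_on unit_disk \<and> f 0 = 0 \<and> deriv f 0 = 1"

definition convex_order :: "real \<Rightarrow> (complex \<Rightarrow> complex) \<Rightarrow> bool" where
  "convex_order lam f \<longleftrightarrow> normalized_analytic f \<and>
     (\<forall>z\<in>unit_disk. deriv f z \<noteq> 0 \<and>
        Re (1 + z * deriv (deriv f) z / deriv f z) > lam)"

text \<open>The operator C_beta[f](z) = integral from 0 to z of f(w) / (w (1-w)^beta) dw,
  principal branch of (1-w)^beta (complex powr uses the principal logarithm).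
  The integral is taken along the segment from 0 to z (path independent
  in the disk); the integrand's removable singularity at 0 is a single point.\<close>
definition C_op :: "real \<Rightarrow> (complex \<Rightarrow> complex) \<Rightarrow> complex \<Rightarrow> complex" where
  "C_op \<beta> f z = contour_integral (linepath 0 z)
       (\<lambda>w. f w / (w * (1 - w) powr (complex_of_real \<beta>)))"

end

theory Submission
  imports Defs
begin

lemma re_inv_gt:
  fixes w :: complex assumes "norm w < 1"
  shows "Re (1 / (1 - w)) > 1/2"
proof -
  define a where "a = Re w"
  define b where "b = Im w"
  have "(cmod w)\<^sup>2 < 1" using assms by (simp add: abs_square_less_1)
  moreover have "(cmod w)\<^sup>2 = (Re w)\<^sup>2 + (Im w)\<^sup>2" by (rule cmod_power2)
  ultimately have n2: "a * a + b * b < 1" unfolding a_def b_def by (simp add: power2_eq_square)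
  have a1: "a < 1" unfolding a_def using assms abs_Re_le_cmod[of w] by linarith
  define D where "D = (1 - a) * (1 - a) + b * b"
  have Dpos: "D > 0" unfolding D_def using a1 by (simp add: add_pos_nonneg)
  have DD: "D < 2 * (1 - a)" unfolding D_def using n2 by (simp add: algebra_simps)
  have "Re (1 / (1 - w)) = (1 - a) / D"
    by (simp add: Re_divide a_def b_def D_def power2_eq_square)
  moreover have "(1 - a) / D > 1/2"
    using Dpos DD by (simp add: less_divide_eq)
  ultimately show ?thesis by simp
qed

lemma re_frac_gt:
  fixes z :: complex assumes "norm z < 1"
  shows "Re (z / (1 - z)) > - 1/2"
proof -
  have "1 - z \<noteq> 0" using assms by auto
  then have "z / (1 - z) = 1 / (1 - z) - 1"
    by (simp add: field_simps)
  then show ?thesis using re_inv_gt[OF assms] by simp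
qed

lemma jack_alg:
  fixes w0 P :: complex and \<kappa> :: real
  assumes "norm w0 = 1" "\<kappa> \<ge> 1" "(1 - w0) * P = 1 + of_real \<kappa> * w0"
  shows "Re P \<le> 0"
proof -
  define a where "a = Re w0"
  define b where "b = Im w0"
  define x where "x = Re P"
  define y where "y = Im P"
  have ab: "a\<^sup>2 + b\<^sup>2 = 1" using assms(1) unfolding a_def b_def
    by (metis cmod_power2 power_one)
  have e1: "(1 - a) * x + b * y = 1 + \<kappa> * a"
    using arg_cong[OF assms(3), of Re] unfolding a_def b_def x_def y_def by simp
  have e2: "(1 - a) * y - b * x = \<kappa> * b"
    using arg_cong[OF assms(3), of Im] unfolding a_def b_def x_def y_def by (simp add: algebra_simps)
  have b2: "b\<^sup>2 = 1 - a\<^sup>2" using ab by simp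
  have "x * ((1 - a)\<^sup>2 + b\<^sup>2) = (1 - a) * ((1 - a) * x + b * y) - b * ((1 - a) * y - b * x)"
    by (simp add: power2_eq_square algebra_simps)
  also have "\<dots> = (1 - a) * (1 + \<kappa> * a) - b * (\<kappa> * b)"
    by (simp only: e1 e2)
  finally have k0: "x * ((1 - a)\<^sup>2 + b\<^sup>2) = (1 - a) * (1 + \<kappa> * a) - \<kappa> * b\<^sup>2"
    by (simp add: power2_eq_square)
  have key: "x * (2 - 2 * a) = (1 - a) * (1 - \<kappa>)"
  proof -
    have "(1 - a)\<^sup>2 + b\<^sup>2 = 2 - 2 * a" using b2 by (simp add: power2_eq_square algebra_simps)
    moreover have "(1 - a) * (1 + \<kappa> * a) - \<kappa> * b\<^sup>2 = (1 - a) * (1 - \<kappa>)"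
      unfolding b2 by (simp add: power2_eq_square algebra_simps)
    ultimately show ?thesis using k0 by simp
  qed
  have "a\<^sup>2 \<le> 1" using ab by (metis le_add_same_cancel1 zero_le_power2)
  then have "a \<le> 1" by (simp add: abs_square_le_1)
  show ?thesis
  proof (cases "a = 1")
    case True
    then have "b = 0" using ab by simp
    then show ?thesis using e1 True assms(2) by simp
  next
    case False
    with \<open>a \<le> 1\<close> have "a < 1" by simp
    have "(x * 2) * (1 - a) = (1 - \<kappa>) * (1 - a)" using key by (simp add: algebra_simps)
    then have "x * 2 = 1 - \<kappa>" using \<open>a < 1\<close> by simp
    then have "x = (1 - \<kappa>) / 2" by simp
    then show ?thesis using assms(2) unfolding x_def by simp
  qed
qed

lemma prim:
  assumes h: "h holomorphic_on ball 0 1" and z: "z \<in> ball 0 1"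
  shows "((\<lambda>x. contour_integral (linepath 0 x) h) has_field_derivative h z) (at z)"
proof -
  have "((\<lambda>x. contour_integral (linepath 0 x) h) has_field_derivative h z) (at z within ball 0 1)"
  proof (rule triangle_contour_integrals_convex_primitive)
    show "continuous_on (ball 0 1) h" using h holomorphic_on_imp_continuous_on by blast
    fix b c :: complex assume bc: "b \<in> ball 0 1" "c \<in> ball 0 1"
    have "(h has_contour_integral 0) (linepath 0 b +++ linepath b c +++ linepath c 0)"
    proof (rule Cauchy_theorem_convex_simple[OF h])
      have "closed_segment 0 b \<subseteq> ball 0 1" "closed_segment b c \<subseteq> ball 0 1" "closed_segment c 0 \<subseteq> ball 0 1"
        using bc by (meson closed_segment_subset convex_ball centre_in_ball zero_less_one)+
      then show "path_image (linepath 0 b +++ linepath b c +++ linepath c 0) \<subseteq> ball 0 1"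
        by (auto simp: path_image_join)
    qed auto
    then show "contour_integral (linepath 0 b) h + contour_integral (linepath b c) h + contour_integral (linepath c 0) h = 0"
      by (rule has_chain_integral_chain_integral3)
  qed (use z in auto)
  then show ?thesis using at_within_open[of z "ball 0 1"] z by simp
qed

lemma ci_spike0:
  assumes "\<And>w. w \<noteq> 0 \<Longrightarrow> F w = G w"
  shows "contour_integral (linepath 0 z) F = contour_integral (linepath 0 z) G"
proof (cases "z = 0")
  case True then show ?thesis by simp
next
  case False
  show ?thesis unfolding contour_integral_integral
  proof (rule integral_spike[of "{0}"])
    fix t assume "t \<in> {0..1} - {0::real}"
    then have "linepath 0 z t \<noteq> 0" using False by (auto simp: linepath_def)
    then show "G (linepath 0 z t) * vector_derivative (linepath 0 z) (at t) = F (linepath 0 z t) * vector_derivative (linepath 0 z) (at t)"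
      using assms by simp
  qed auto
qed

lemma lin_aux: fixes X Y Z b :: real assumes "- b / 2 \<le> Z" "X = Y + Z" "1/2 < Y" shows "(1 - b) / 2 < X"
proof -
  have "(1 - b) / 2 = 1/2 + (- b / 2)" by (simp add: field_simps)
  also have "\<dots> < Y + Z" by (rule add_less_le_mono[OF assms(3) assms(1)])
  finally show ?thesis using assms(2) by simp
qed

lemma jack:
  fixes w P :: "complex \<Rightarrow> complex"
  assumes hw: "w holomorphic_on ball 0 1" and w0: "w 0 = 0"
    and Ppos: "\<And>z. z \<in> ball 0 1 \<Longrightarrow> Re (P z) > 0"
    and ident: "\<And>z. z \<in> ball 0 1 \<Longrightarrow> (1 - w z) * P z = 1 + z * deriv w z"
    and z: "z \<in> ball 0 1"
  shows "norm (w z) < 1"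
proof (rule ccontr)
  assume "\<not> norm (w z) < 1"
  hence z1: "norm (w z) \<ge> 1" by simp
  define R where "R = norm z"
  have R1: "R < 1" using z unfolding R_def by simp
  have cont: "continuous_on (ball 0 1) w" by (rule holomorphic_on_imp_continuous_on[OF hw])
  have cbs: "cball 0 R \<subseteq> ball 0 1" using R1 by auto
  have contR: "continuous_on (cball 0 R) w" using continuous_on_subset[OF cont cbs] .
  define K where "K = cball 0 R \<inter> (\<lambda>z. norm (w z)) -` {1..}"
  have "closed K" unfolding K_def
    by (intro continuous_closed_preimage continuous_on_norm contR) auto
  then have "compact (cball 0 R \<inter> K)" by (intro compact_Int_closed) auto
  moreover have "cball 0 R \<inter> K = K" unfolding K_def by auto
  ultimately have cK: "compact K" by simp
  have "z \<in> K" unfolding K_def R_def using z1 by auto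
  then obtain z0 where z0K: "z0 \<in> K" and mn: "\<And>y. y \<in> K \<Longrightarrow> norm z0 \<le> norm y"
    using continuous_attains_inf[OF cK, of norm] continuous_on_norm_id by blast
  define r where "r = norm z0"
  have rR: "r \<le> R" and wz0ge: "norm (w z0) \<ge> 1" using z0K unfolding K_def r_def by auto
  have "z0 \<noteq> 0" using wz0ge w0 by auto
  then have rpos: "r > 0" unfolding r_def by simp
  have inside: "norm (w y) < 1" if "norm y < r" for y
  proof (rule ccontr)
    assume "\<not> norm (w y) < 1"
    then have "y \<in> K" unfolding K_def using that rR by auto
    then show False using mn that unfolding r_def by force
  qed
  have z0D: "z0 \<in> ball 0 1" using rR R1 unfolding r_def by simp
  have icw: "isCont w z0"
    using cont z0D continuous_on_eq_continuous_at[of "ball 0 1" w] by auto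
  have wz0: "norm (w z0) = 1"
  proof -
    have "((\<lambda>t. of_real t * z0) \<longlongrightarrow> z0) (at_left (1::real))"
      by (auto intro!: tendsto_eq_intros)
    then have "((\<lambda>t. norm (w (of_real t * z0))) \<longlongrightarrow> norm (w z0)) (at_left (1::real))"
      by (intro tendsto_norm isCont_tendsto_compose[OF icw])
    moreover have "eventually (\<lambda>t. norm (w (of_real t * z0)) \<le> 1) (at_left (1::real))"
    proof (rule eventually_mono[OF eventually_at_left_real[of 0 1]])
      fix t :: real assume "t \<in> {0<..<1}"
      then have "norm (of_real t * z0) < r" using rpos unfolding r_def by (simp add: norm_mult)
      then show "norm (w (of_real t * z0)) \<le> 1" using inside by (simp add: less_imp_le)
    qed simp
    ultimately have "norm (w z0) \<le> 1"
      by (rule tendsto_upperbound) (simp add: trivial_limit_at_left_real)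
    then show ?thesis using wz0ge by simp
  qed
  define w1 where "w1 = w z0"
  have w1nz: "w1 \<noteq> 0" using wz0 unfolding w1_def by auto
  have schw: "norm (w \<zeta>) \<le> norm \<zeta> / r" if "norm \<zeta> < r" for \<zeta>
  proof -
    define u where "u = w \<circ> (\<lambda>\<xi>. of_real r * \<xi>)"
    have "(\<lambda>\<xi>::complex. of_real r * \<xi>) ` ball 0 1 \<subseteq> ball (0::complex) 1"
    proof
      fix y :: complex assume "y \<in> (\<lambda>\<xi>::complex. of_real r * \<xi>) ` ball 0 1"
      then obtain \<xi> where xi: "norm \<xi> < 1" "y = of_real r * \<xi>" by auto
      then have "norm y = r * norm \<xi>" using rpos by (simp add: norm_mult)
      also have "\<dots> < r" using xi(1) rpos by simp
      finally show "y \<in> ball 0 1" using rR R1 by simp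
    qed
    then have hu: "u holomorphic_on ball 0 1" unfolding u_def
      by (intro holomorphic_on_compose_gen[OF _ hw]) (auto intro!: holomorphic_intros)
    have u0: "u 0 = 0" unfolding u_def using w0 by simp
    have ub: "norm (u \<xi>) < 1" if "norm \<xi> < 1" for \<xi>
    proof -
      have "norm (of_real r * \<xi>) < r" using that rpos by (simp add: norm_mult)
      then show ?thesis unfolding u_def using inside by simp
    qed
    have "norm (\<zeta> / of_real r) < 1" using that rpos by (simp add: norm_divide)
    then have "norm (u (\<zeta> / of_real r)) \<le> norm (\<zeta> / of_real r)"
      using Schwarz_Lemma(1)[OF hu u0 ub] by blast
    moreover have "u (\<zeta> / of_real r) = w \<zeta>" unfolding u_def using rpos by simp
    ultimately show ?thesis using rpos by (simp add: norm_divide)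
  qed
  define d where "d = deriv w z0"
  have dz0: "(w has_field_derivative d) (at z0)" unfolding d_def
    using holomorphic_derivI[OF hw open_ball z0D] .
  define k where "k = z0 * d / w1"
  have claim: "Re (k * (-1 + \<i> * of_real s)) \<le> -1" for s :: real
  proof -
    define u where "u = -1 + \<i> * of_real s"
    define c where "c = (1 + s\<^sup>2) / 2"
    have cpos: "c > 0" unfolding c_def by (simp add: add_pos_nonneg)
    define \<phi> where "\<phi> = (\<lambda>\<eta>. w (z0 + z0 * u * \<eta>))"
    have g: "((\<lambda>\<eta>. z0 + z0 * u * \<eta>) has_field_derivative z0 * u) (at 0)"
      by (auto intro!: derivative_eq_intros)
    have dz0': "(w has_field_derivative d) (at (z0 + z0 * u * 0))" using dz0 by simp
    have "(\<phi> has_field_derivative d * (z0 * u)) (at 0)"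
      unfolding \<phi>_def using DERIV_chain2[OF dz0' g] .
    then have lim1: "((\<lambda>\<eta>. (\<phi> \<eta> - \<phi> 0) / \<eta>) \<longlongrightarrow> d * (z0 * u)) (at 0)"
      by (simp add: DERIV_def)
    have ofr: "filterlim complex_of_real (at 0) (at_right (0::real))"
    proof (rule filterlim_atI)
      show "((\<lambda>x. complex_of_real x) \<longlongrightarrow> 0) (at_right 0)"
        by (auto intro!: tendsto_eq_intros)
      show "\<forall>\<^sub>F x in at_right 0. complex_of_real x \<noteq> 0"
        using eventually_at_right_less[of "0::real"] by (rule eventually_mono) simp
    qed
    have lim2: "((\<lambda>h. (\<phi> (of_real h) - \<phi> 0) / of_real h) \<longlongrightarrow> d * (z0 * u)) (at_right (0::real))"
      using filterlim_compose[OF lim1 ofr] by simp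
    have "d * (z0 * u) / w1 = k * u" unfolding k_def by simp
    then have lim3: "((\<lambda>h. Re ((\<phi> (of_real h) - \<phi> 0) / of_real h / w1)) \<longlongrightarrow> Re (k * u)) (at_right (0::real))"
      using tendsto_Re[OF tendsto_divide[OF lim2 tendsto_const w1nz]] by simp
    have lim4: "((\<lambda>h. -1 + c * h) \<longlongrightarrow> -1) (at_right (0::real))"
      by (auto intro!: tendsto_eq_intros)
    have ev: "eventually (\<lambda>h. Re ((\<phi> (of_real h) - \<phi> 0) / of_real h / w1) \<le> -1 + c * h) (at_right (0::real))"
    proof (rule eventually_mono[OF eventually_at_right_real[of 0 "1/c"]])
      show "(0::real) < 1 / c" using cpos by simp
      fix h :: real assume "h \<in> {0<..<1/c}"
      then have h0: "h > 0" and hc: "c * h < 1" using cpos by (auto simp: field_simps)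
      define n where "n = norm (1 + of_real h * u)"
      have n0: "n \<ge> 0" unfolding n_def by simp
      have "n\<^sup>2 = (Re (1 + of_real h * u))\<^sup>2 + (Im (1 + of_real h * u))\<^sup>2"
        unfolding n_def by (rule cmod_power2)
      also have "\<dots> = (1 - h)\<^sup>2 + (s * h)\<^sup>2" unfolding u_def by (simp add: mult.commute)
      finally have n2: "n\<^sup>2 = 1 - 2 * h + 2 * c * h\<^sup>2"
        unfolding c_def by (simp add: power2_eq_square algebra_simps)
      have chh: "c * h * h < h" using mult_strict_right_mono[OF hc h0] by simp
      have "n\<^sup>2 < 1\<^sup>2" using n2 chh by (simp add: power2_eq_square algebra_simps)
      then have nlt: "n < 1" using n0 by (simp add: power_less_imp_less_base)
      have pos: "1 - h + c * h\<^sup>2 \<ge> 0"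
      proof -
        have "c \<ge> 1/2" unfolding c_def by simp
        then have "(1/2) * h\<^sup>2 \<le> c * h\<^sup>2" by (rule mult_right_mono) simp
        moreover have "1 - h + h\<^sup>2/2 \<ge> 0"
          using zero_le_power2[of "1 - h"] by (simp add: power2_eq_square algebra_simps)
        ultimately show ?thesis by linarith
      qed
      have "(1 - h + c * h\<^sup>2)\<^sup>2 - n\<^sup>2 = h\<^sup>2 * (1 - c * h)\<^sup>2"
        unfolding n2 by (simp add: power2_eq_square algebra_simps)
      then have "n\<^sup>2 \<le> (1 - h + c * h\<^sup>2)\<^sup>2" by (metis diff_ge_0_iff_ge zero_le_mult_iff zero_le_power2)
      then have nle: "n \<le> 1 - h + c * h\<^sup>2" using pos by (rule power2_le_imp_le)
      define \<zeta> where "\<zeta> = z0 + z0 * u * of_real h"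
      have "\<zeta> = z0 * (1 + of_real h * u)" unfolding \<zeta>_def by (simp add: algebra_simps)
      then have nz: "norm \<zeta> = r * n" unfolding r_def n_def by (simp add: norm_mult)
      then have "norm \<zeta> < r" using nlt rpos by simp
      then have "norm (w \<zeta>) \<le> norm \<zeta> / r" by (rule schw)
      then have wle: "norm (w \<zeta>) \<le> n" using nz rpos by simp
      have "Re (w \<zeta> / w1) \<le> norm (w \<zeta> / w1)" by (rule complex_Re_le_cmod)
      also have "\<dots> = norm (w \<zeta>)" using wz0 unfolding w1_def by (simp add: norm_divide)
      finally have Rle: "Re (w \<zeta> / w1) \<le> 1 - h + c * h\<^sup>2" using wle nle by linarith
      have eq: "(\<phi> (of_real h) - \<phi> 0) / of_real h / w1 = (w \<zeta> / w1 - 1) / of_real h"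
        unfolding \<phi>_def \<zeta>_def w1_def using w1nz unfolding w1_def by (simp add: field_simps)
      have "Re ((w \<zeta> / w1 - 1) / of_real h) = (Re (w \<zeta> / w1) - 1) / h"
        by (simp add: Re_divide_of_real)
      also have "\<dots> \<le> -1 + c * h"
      proof -
        have "Re (w \<zeta> / w1) - 1 \<le> (-1 + c * h) * h"
          using Rle by (simp add: power2_eq_square algebra_simps)
        then show ?thesis by (subst pos_divide_le_eq[OF h0])
      qed
      finally show "Re ((\<phi> (of_real h) - \<phi> 0) / of_real h / w1) \<le> -1 + c * h"
        using eq by simp
    qed
    have "Re (k * u) \<le> -1"
      using tendsto_le[OF trivial_limit_at_right_real lim4 lim3 ev] .
    then show ?thesis unfolding u_def .
  qed
  have cl: "- Re k - s * Im k \<le> -1" for s :: real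
    using claim[of s] by (simp add: mult.commute)
  have Rek: "Re k \<ge> 1" using cl[of 0] by simp
  have Imk: "Im k = 0"
  proof (rule ccontr)
    assume "Im k \<noteq> 0"
    then show False using cl[of "- Re k / Im k"] by (simp add: field_simps)
  qed
  have kreal: "k = of_real (Re k)" using Imk by (simp add: complex_eq_iff)
  have "z0 * d = k * w1" unfolding k_def using w1nz by simp
  then have "(1 - w1) * P z0 = 1 + of_real (Re k) * w1"
    using ident[OF z0D] kreal unfolding w1_def d_def by metis
  then have "Re (P z0) \<le> 0"
    using jack_alg[of w1 "Re k" "P z0"] wz0 Rek unfolding w1_def by simp
  then show False using Ppos[OF z0D] by simp
qed


lemma one_minus_notin:
  fixes z :: complex assumes "z \<in> ball 0 1"
  shows "1 - z \<notin> \<real>\<^sub>\<le>\<^sub>0" and "1 - z \<noteq> 0"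
proof -
  have "Re z < 1" using assms abs_Re_le_cmod[of z] by auto
  then show "1 - z \<notin> \<real>\<^sub>\<le>\<^sub>0" by (simp add: complex_nonpos_Reals_iff)
  show "1 - z \<noteq> 0" using \<open>Re z < 1\<close> by auto
qed

lemma powr_nz:
  fixes x a :: complex assumes "x \<noteq> 0"
  shows "x powr a \<noteq> 0"
  using assms by (simp add: powr_def)

lemma powr_minus1:
  fixes x a :: complex assumes "x \<noteq> 0"
  shows "x powr (a - 1) = x powr a / x"
  using assms by (simp add: powr_def exp_diff left_diff_distrib)

theorem theorem2p13:
  fixes \<beta> :: real and f :: "complex \<Rightarrow> complex"
  assumes "0 \<le> \<beta>" and "\<beta> \<le> 1"
    and "convex_order 0 f"
  shows "convex_order ((1 - \<beta>) / 2) (C_op \<beta> f) \<and> convex_order 0 (C_op \<beta> f)"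
proof -
  define D where "D = ball (0::complex) 1"
  have oD: "open D" unfolding D_def by simp
  have hf: "f holomorphic_on D" and f0: "f 0 = 0" and df0: "deriv f 0 = 1"
    using assms(3) unfolding convex_order_def normalized_analytic_def D_def by auto
  have f'nz: "deriv f z \<noteq> 0" and conv: "Re (1 + z * deriv (deriv f) z / deriv f z) > 0"
    if "z \<in> D" for z
    using assms(3) that unfolding convex_order_def D_def by auto
  define f' where "f' = deriv f"
  define f'' where "f'' = deriv f'"
  have hf': "f' holomorphic_on D" unfolding f'_def using holomorphic_deriv[OF hf oD] .
  define g where "g = (\<lambda>z. if z = 0 then deriv f 0 else (f z - f 0) / (z - 0))"
  have hg: "g holomorphic_on D" unfolding g_def using pole_lemma_open[OF hf oD, of 0] .
  have g0: "g 0 = 1" unfolding g_def using df0 by simp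
  have gz: "g z = f z / z" if "z \<noteq> 0" for z unfolding g_def using that f0 by simp
  have fg: "f = (\<lambda>z. z * g z)"
  proof
    fix z show "f z = z * g z" by (cases "z = 0") (simp_all add: f0 gz)
  qed
  have dg: "(g has_field_derivative deriv g z) (at z)" if "z \<in> D" for z
    using holomorphic_derivI[OF hg oD that] .
  have df': "(f' has_field_derivative f'' z) (at z)" if "z \<in> D" for z
    unfolding f''_def using holomorphic_derivI[OF hf' oD that] .
  have f'g: "f' z = g z + z * deriv g z" if "z \<in> D" for z
  proof -
    have "((\<lambda>z. z * g z) has_field_derivative g z + z * deriv g z) (at z)"
      using dg[OF that] by (auto intro!: derivative_eq_intros)
    then show ?thesis unfolding f'_def by (subst fg) (rule DERIV_imp_deriv)
  qed
  have f'nz': "f' z \<noteq> 0" if "z \<in> D" for z using f'nz[OF that] unfolding f'_def .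
  define q where "q = (\<lambda>z. g z / f' z)"
  define w where "w = (\<lambda>z. 1 - q z)"
  have hw: "w holomorphic_on D" unfolding w_def q_def
    using hg hf' f'nz' by (auto intro!: holomorphic_intros)
  have w0: "w 0 = 0" unfolding w_def q_def using g0 df0 f'_def by simp
  define P where "P = (\<lambda>z. 1 + z * f'' z / f' z)"
  have Ppos: "Re (P z) > 0" if "z \<in> D" for z
    using conv[OF that] unfolding P_def f''_def f'_def .
  have ident: "(1 - w z) * P z = 1 + z * deriv w z" if "z \<in> D" for z
  proof -
    define A where "A = f' z"
    define G where "G = g z"
    define G' where "G' = deriv g z"
    define B where "B = f'' z"
    have A0: "A \<noteq> 0" unfolding A_def using f'nz'[OF that] .
    have rel: "A = G + z * G'" unfolding A_def G_def G'_def using f'g[OF that] .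
    have "(w has_field_derivative - ((G' * A - G * B) / (A * A))) (at z)"
      unfolding w_def q_def A_def G_def G'_def B_def
      using dg[OF that] df'[OF that] f'nz'[OF that]
      by (auto intro!: derivative_eq_intros simp: power2_eq_square)
    then have dw: "deriv w z = - ((G' * A - G * B) / (A * A))" by (rule DERIV_imp_deriv)
    have "(1 - w z) * P z = (G * A + z * G * B) / (A * A)"
      unfolding w_def q_def P_def A_def[symmetric] G_def[symmetric] B_def[symmetric]
      using A0 by (simp add: field_simps)
    also have "\<dots> = (A * A - z * G' * A + z * G * B) / (A * A)"
    proof -
      have "G * A = A * A - z * G' * A" using rel by (simp add: algebra_simps)
      then show ?thesis by simp
    qed
    also have "\<dots> = 1 + z * deriv w z"
      unfolding dw using A0 by (simp add: field_simps)
    finally show ?thesis .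
  qed
  have wlt: "norm (w z) < 1" if "z \<in> D" for z
    using jack[OF hw[unfolded D_def] w0 Ppos[unfolded D_def] ident[unfolded D_def]] that
    unfolding D_def by blast
  have gnz: "g z \<noteq> 0" if "z \<in> D" for z
  proof
    assume "g z = 0"
    then have "w z = 1" unfolding w_def q_def by simp
    then show False using wlt[OF that] by simp
  qed
  define p where "p = (\<lambda>z::complex. (1 - z) powr of_real \<beta>)"
  have pnz: "p z \<noteq> 0" if "z \<in> D" for z
    unfolding p_def using one_minus_notin(2)[of z] that powr_nz unfolding D_def by blast
  define h where "h = (\<lambda>z. g z / p z)"
  have hp: "p holomorphic_on D" unfolding p_def
    using one_minus_notin(1) unfolding D_def
    by (auto intro!: holomorphic_intros holomorphic_on_powr)
  have hh: "h holomorphic_on D" unfolding h_def using hg hp pnz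
    by (auto intro!: holomorphic_intros)
  have Ceq: "C_op \<beta> f = (\<lambda>x. contour_integral (linepath 0 x) h)"
  proof
    fix x
    show "C_op \<beta> f x = contour_integral (linepath 0 x) h"
      unfolding C_op_def
    proof (rule ci_spike0)
      fix v :: complex assume "v \<noteq> 0"
      then show "f v / (v * (1 - v) powr complex_of_real \<beta>) = h v"
        unfolding h_def p_def using gz[of v] by simp
    qed
  qed
  define F where "F = C_op \<beta> f"
  have dF: "(F has_field_derivative h z) (at z)" if "z \<in> D" for z
    unfolding F_def Ceq using prim[OF hh[unfolded D_def]] that unfolding D_def by blast
  have holF: "F holomorphic_on D" using dF holomorphic_on_open[OF oD] by blast
  have derivF: "deriv F z = h z" if "z \<in> D" for z using dF[OF that] by (rule DERIV_imp_deriv)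
  have F0: "F 0 = 0" unfolding F_def Ceq by simp
  have D0: "0 \<in> D" unfolding D_def by simp
  have dF0: "deriv F 0 = 1" using derivF[OF D0] unfolding h_def p_def using g0 by simp
  have ddF: "deriv (deriv F) z = deriv h z" if "z \<in> D" for z
  proof (rule deriv_cong_ev)
    show "\<forall>\<^sub>F x in nhds z. deriv F x = h x"
      using eventually_nhds_in_open[OF oD that] by (rule eventually_mono) (rule derivF)
  qed simp
  have key: "Re (1 + z * deriv h z / h z) > (1 - \<beta>) / 2" if "z \<in> D" for z
  proof -
    have zD: "z \<in> ball 0 1" using that unfolding D_def .
    define G where "G = g z"
    define G' where "G' = deriv g z"
    define A where "A = f' z"
    define Q where "Q = p z"
    have G0: "G \<noteq> 0" unfolding G_def using gnz[OF that] .
    have Q0: "Q \<noteq> 0" unfolding Q_def using pnz[OF that] .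
    have z1: "1 - z \<noteq> 0" using one_minus_notin(2)[OF zD] .
    have dp: "(p has_field_derivative - (of_real \<beta> * Q / (1 - z))) (at z)"
    proof -
      have "(p has_field_derivative of_real \<beta> * (1 - z) powr (of_real \<beta> - 1) * (- 1)) (at z)"
        unfolding p_def using one_minus_notin(1)[OF zD]
        by (auto intro!: derivative_eq_intros)
      then show ?thesis unfolding Q_def p_def using powr_minus1[OF z1] by simp
    qed
    have "(h has_field_derivative (G' * Q - G * (- (of_real \<beta> * Q / (1 - z)))) / (Q * Q)) (at z)"
      unfolding h_def G_def G'_def Q_def using dg[OF that] dp[unfolded Q_def] pnz[OF that]
      by (auto intro!: derivative_eq_intros simp: power2_eq_square)
    then have dh: "deriv h z = (G' * Q - G * (- (of_real \<beta> * Q / (1 - z)))) / (Q * Q)"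
      by (rule DERIV_imp_deriv)
    have hz: "h z = G / Q" unfolding h_def G_def Q_def ..
    have "1 + z * deriv h z / h z = (1 + z * G' / G) + of_real \<beta> * (z / (1 - z))"
      unfolding dh hz using G0 Q0 z1 by (simp add: field_simps)
    also have "1 + z * G' / G = A / G"
      using f'g[OF that] G0 unfolding A_def G_def G'_def by (simp add: field_simps)
    also have "A / G = 1 / (1 - w z)"
      unfolding w_def q_def A_def G_def using G0 f'nz'[OF that] by simp
    finally have eq: "1 + z * deriv h z / h z = 1 / (1 - w z) + of_real \<beta> * (z / (1 - z))" .
    have r1: "Re (1 / (1 - w z)) > 1/2" using re_inv_gt wlt[OF that] by blast
    have r2: "Re (z / (1 - z)) > - 1/2" using re_frac_gt zD by simp
    have "\<beta> * Re (z / (1 - z)) \<ge> \<beta> * (- 1/2)"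
      using r2 assms(1) by (intro mult_left_mono) auto
    then have m1: "\<beta> * Re (z / (1 - z)) \<ge> - \<beta> / 2" by simp
    have r0: "\<And>u. Re (of_real \<beta> * u) = \<beta> * Re u" by simp
    have r3: "Re (of_real \<beta> * (z / (1 - z))) = \<beta> * Re (z / (1 - z))" by (rule r0)
    have X: "Re (1 + z * deriv h z / h z) = Re (1 / (1 - w z)) + \<beta> * Re (z / (1 - z))"
      unfolding eq by (simp only: plus_complex.sel r3)
    show ?thesis by (rule lin_aux[OF m1 X r1])
  qed
  have hnz: "h z \<noteq> 0" if "z \<in> D" for z unfolding h_def using gnz[OF that] pnz[OF that] by simp
  have main: "convex_order lam F" if "lam \<le> (1 - \<beta>) / 2" for lam
    unfolding convex_order_def normalized_analytic_def
  proof (intro conjI ballI)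
    show "F holomorphic_on unit_disk" using holF unfolding D_def .
    show "F 0 = 0" by (rule F0)
    show "deriv F 0 = 1" by (rule dF0)
    fix z :: complex assume "z \<in> unit_disk"
    then have zD: "z \<in> D" unfolding D_def .
    show "deriv F z \<noteq> 0" using derivF[OF zD] hnz[OF zD] by simp
    show "lam < Re (1 + z * deriv (deriv F) z / deriv F z)"
      using key[OF zD] derivF[OF zD] ddF[OF zD] that by simp
  qed
  have "convex_order ((1 - \<beta>) / 2) F" by (rule main) simp
  moreover have "convex_order 0 F" by (rule main) (use assms(2) in simp)
  ultimately show ?thesis unfolding F_def by simp
qed

end
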